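(* Let $A$ be a finite nonempty sum-free subset of $\mathbb N$ (i.e. $A\cap(A+A)=\emptyset$). Then $I_{\{0\}\cup A}$ is an atom of $\mathcal I(R)$.
   Context: Let $D$ be an integral domain, $N\ge2$, $R=D[X_1,\dots,X_N]$, $X=X_1$, $Y=X_2$. $\mathcal I(R)$ denotes the monoid of nonzero ideals of $R$ under ideal multiplication (identity $R$, whose only unit is $R$). Standing assumption: $\mathcal I(R)$ is a BF-monoid. An atom of $\mathcal I(R)$ is an ideal $I\in\mathcal I(R)$, $I\ne R$, such that $I=\mathfrak a\mathfrak b$ with $\mathfrak a,\mathfrak b\in\mathcal I(R)$ forces $\mathfrak a=R$ or $\mathfrak b=R$. For a finite nonempty set $B=\{n_1<\dots<n_\ell\}\subseteq\mathbb N$, $I_B:=\langle X^{n_\ell-n_i}Y^{n_i}: 1\le i\le \ell\rangle\subseteq R$. *)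

theory Defs
  imports "HOL-Library.Poly_Mapping"
begin

definition is_ideal :: "'r::comm_ring_1 set \<Rightarrow> bool" where
  "is_ideal I \<longleftrightarrow> 0 \<in> I \<and> (\<forall>a\<in>I. \<forall>b\<in>I. a + b \<in> I) \<and> (\<forall>r. \<forall>a\<in>I. r * a \<in> I)"

definition ideal_gen :: "'r::comm_ring_1 set \<Rightarrow> 'r set" where
  "ideal_gen S = \<Inter>{I. is_ideal I \<and> S \<subseteq> I}"

definition ideal_mult :: "'r::comm_ring_1 set \<Rightarrow> 'r set \<Rightarrow> 'r set" where
  "ideal_mult I J = ideal_gen {a * b | a b. a \<in> I \<and> b \<in> J}"

text \<open>The monoid of nonzero ideals (identity UNIV, the whole ring).\<close>
definition nz_ideals :: "'r::comm_ring_1 set set" where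
  "nz_ideals = {I. is_ideal I \<and> I \<noteq> {0}}"

definition ideal_atom :: "'r::comm_ring_1 set \<Rightarrow> bool" where
  "ideal_atom I \<longleftrightarrow> I \<in> nz_ideals \<and> I \<noteq> UNIV \<and>
     (\<forall>a\<in>nz_ideals. \<forall>b\<in>nz_ideals. I = ideal_mult a b \<longrightarrow> a = UNIV \<or> b = UNIV)"

definition ideal_prod :: "'r::comm_ring_1 set list \<Rightarrow> 'r set" where
  "ideal_prod xs = foldr ideal_mult xs UNIV"

definition ideal_lengths :: "'r::comm_ring_1 set \<Rightarrow> nat set" where
  "ideal_lengths I = {length xs | xs. (\<forall>J\<in>set xs. ideal_atom J) \<and> ideal_prod xs = I}"

definition ideals_BF :: "'r::comm_ring_1 itself \<Rightarrow> bool" where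
  "ideals_BF _ \<longleftrightarrow> (\<forall>I\<in>(nz_ideals :: 'r set set).
      finite (ideal_lengths I) \<and> (I \<noteq> UNIV \<longrightarrow> ideal_lengths I \<noteq> {}))"

type_synonym ('n, 'a) mpoly = "('n \<Rightarrow>\<^sub>0 nat) \<Rightarrow>\<^sub>0 'a"

definition monXY :: "'n \<Rightarrow> 'n \<Rightarrow> nat \<Rightarrow> nat \<Rightarrow> ('n, 'a::comm_ring_1) mpoly" where
  "monXY x y i j = Poly_Mapping.single (Poly_Mapping.single x i + Poly_Mapping.single y j) 1"

definition I_B :: "'n \<Rightarrow> 'n \<Rightarrow> nat set \<Rightarrow> ('n, 'a::comm_ring_1) mpoly set" where
  "I_B x y B = ideal_gen {monXY x y (Max B - n) n | n. n \<in> B}"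

definition sum_free :: "nat set \<Rightarrow> bool" where
  "sum_free A \<longleftrightarrow> (\<forall>a\<in>A. \<forall>b\<in>A. a + b \<notin> A)"

end

theory Submission
  imports Defs "HOL-Computational_Algebra.Polynomial"
begin

section \<open>Generic ideal facts\<close>

lemma is_ideal_gen: "is_ideal (ideal_gen S)"
  unfolding is_ideal_def ideal_gen_def by auto

lemma gen_sub: "S \<subseteq> ideal_gen S"
  unfolding ideal_gen_def by auto

lemma gen_least: "is_ideal I \<Longrightarrow> S \<subseteq> I \<Longrightarrow> ideal_gen S \<subseteq> I"
  unfolding ideal_gen_def by auto

lemma ideal_0: "is_ideal I \<Longrightarrow> 0 \<in> I"
  unfolding is_ideal_def by auto

lemma ideal_add: "is_ideal I \<Longrightarrow> a \<in> I \<Longrightarrow> b \<in> I \<Longrightarrow> a + b \<in> I"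
  unfolding is_ideal_def by auto

lemma ideal_mul: "is_ideal I \<Longrightarrow> a \<in> I \<Longrightarrow> r * a \<in> I"
  unfolding is_ideal_def by auto

lemma ideal_mul2: "is_ideal I \<Longrightarrow> a \<in> I \<Longrightarrow> a * r \<in> I"
  using ideal_mul[of I a r] by (simp add: mult.commute)

lemma ideal_uminus: "is_ideal I \<Longrightarrow> a \<in> I \<Longrightarrow> - a \<in> I"
  using ideal_mul[of I a "-1"] by simp

lemma ideal_diff: "is_ideal I \<Longrightarrow> a \<in> I \<Longrightarrow> b \<in> I \<Longrightarrow> a - b \<in> I"
  using ideal_add[of I a "-b"] ideal_uminus[of I b] by simp

lemma ideal_sum: "is_ideal I \<Longrightarrow> (\<And>x. x \<in> S \<Longrightarrow> f x \<in> I) \<Longrightarrow> sum f S \<in> I"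
proof (induction S rule: infinite_finite_induct)
  case (infinite A) then show ?case by (simp add: ideal_0)
next
  case empty then show ?case by (simp add: ideal_0)
next
  case (insert x F) then show ?case by (simp add: ideal_add)
qed

lemma ideal_sum_list: "is_ideal I \<Longrightarrow> set xs \<subseteq> I \<Longrightarrow> sum_list xs \<in> I"
  by (induction xs) (simp_all add: ideal_0 ideal_add)

lemma is_ideal_UNIV: "is_ideal UNIV"
  unfolding is_ideal_def by auto

lemma is_ideal_mult: "is_ideal (ideal_mult I J)"
  unfolding ideal_mult_def by (rule is_ideal_gen)

lemma prod_in_mult: "a \<in> I \<Longrightarrow> b \<in> J \<Longrightarrow> a * b \<in> ideal_mult I J"
  unfolding ideal_mult_def by (rule subsetD[OF gen_sub]) blast

definition sumprods :: "'r::comm_ring_1 set \<Rightarrow> 'r set \<Rightarrow> 'r set" where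
  "sumprods I J = {sum_list (map (\<lambda>(a,b). a * b) ps) | ps. set ps \<subseteq> I \<times> J}"

lemma sumprods_ideal:
  assumes "is_ideal I"
  shows "is_ideal (sumprods I J)"
  unfolding is_ideal_def
proof (intro conjI ballI allI)
  show "0 \<in> sumprods I J" unfolding sumprods_def
    by (rule CollectI, rule exI[of _ "[]"]) auto
next
  fix a b assume "a \<in> sumprods I J" "b \<in> sumprods I J"
  then obtain ps qs where "set ps \<subseteq> I \<times> J" "a = sum_list (map (\<lambda>(a,b). a * b) ps)"
    "set qs \<subseteq> I \<times> J" "b = sum_list (map (\<lambda>(a,b). a * b) qs)"
    unfolding sumprods_def by auto
  then show "a + b \<in> sumprods I J" unfolding sumprods_def
    by (intro CollectI exI[of _ "ps @ qs"]) auto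
next
  fix r a assume "a \<in> sumprods I J"
  then obtain ps where ps: "set ps \<subseteq> I \<times> J" "a = sum_list (map (\<lambda>(a,b). a * b) ps)"
    unfolding sumprods_def by auto
  let ?qs = "map (\<lambda>(a,b). (r * a, b)) ps"
  have "set ?qs \<subseteq> I \<times> J" using ps(1) ideal_mul[OF assms] by auto
  moreover have "r * a = sum_list (map (\<lambda>(a,b). a * b) ?qs)"
    unfolding ps(2) by (induction ps) (auto simp: algebra_simps)
  ultimately show "r * a \<in> sumprods I J" unfolding sumprods_def by blast
qed

lemma mult_rep:
  assumes "is_ideal I" "z \<in> ideal_mult I J"
  shows "\<exists>ps. set ps \<subseteq> I \<times> J \<and> z = sum_list (map (\<lambda>(a,b). a * b) ps)"
proof -
  have "ideal_mult I J \<subseteq> sumprods I J"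
    unfolding ideal_mult_def
  proof (rule gen_least[OF sumprods_ideal[OF assms(1)]])
    show "{a * b |a b. a \<in> I \<and> b \<in> J} \<subseteq> sumprods I J"
    proof
      fix z assume "z \<in> {a * b |a b. a \<in> I \<and> b \<in> J}"
      then obtain a b where "a \<in> I" "b \<in> J" "z = a * b" by auto
      then show "z \<in> sumprods I J" unfolding sumprods_def
        by (intro CollectI exI[of _ "[(a,b)]"]) auto
    qed
  qed
  then show ?thesis using assms(2) unfolding sumprods_def by auto
qed

lemma mult_comm: "ideal_mult I J = ideal_mult J I"
proof -
  have "{a * b |a b. a \<in> I \<and> b \<in> J} = {a * b |a b. a \<in> J \<and> b \<in> I}"
    by (metis (no_types, opaque_lifting) mult.commute)
  then show ?thesis unfolding ideal_mult_def by simp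
qed

lemma mult_sub_right: "is_ideal J \<Longrightarrow> ideal_mult I J \<subseteq> J"
  unfolding ideal_mult_def by (rule gen_least) (auto simp: ideal_mul)

lemma mult_sub_left: "is_ideal I \<Longrightarrow> ideal_mult I J \<subseteq> I"
  using mult_sub_right[of I J] mult_comm[of I J] by simp

lemma mult_UNIV: "is_ideal J \<Longrightarrow> ideal_mult UNIV J = J"
proof
  assume "is_ideal J"
  show "ideal_mult UNIV J \<subseteq> J" by (rule mult_sub_right) fact
  show "J \<subseteq> ideal_mult UNIV J"
  proof
    fix z assume "z \<in> J"
    then have "1 * z \<in> ideal_mult UNIV J" by (intro prod_in_mult) auto
    then show "z \<in> ideal_mult UNIV J" by simp
  qed
qed

lemma mult_assoc_sub:
  assumes "is_ideal A" "is_ideal B" "is_ideal C"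
  shows "ideal_mult (ideal_mult A B) C \<subseteq> ideal_mult A (ideal_mult B C)"
  unfolding ideal_mult_def[of "ideal_mult A B"]
proof (rule gen_least[OF is_ideal_mult], safe)
  fix z c assume z: "z \<in> ideal_mult A B" and c: "c \<in> C"
  obtain ps where ps: "set ps \<subseteq> A \<times> B" "z = sum_list (map (\<lambda>(a,b). a * b) ps)"
    using mult_rep[OF assms(1) z] by auto
  have "z * c = sum_list (map (\<lambda>(a,b). a * (b * c)) ps)"
    unfolding ps(2) by (induction ps) (auto simp: algebra_simps)
  also have "\<dots> \<in> ideal_mult A (ideal_mult B C)"
    using ps(1) c by (intro ideal_sum_list[OF is_ideal_mult]) (auto intro!: prod_in_mult)
  finally show "z * c \<in> ideal_mult A (ideal_mult B C)" .
qed

lemma mult_assoc: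
  assumes "is_ideal A" "is_ideal B" "is_ideal C"
  shows "ideal_mult (ideal_mult A B) C = ideal_mult A (ideal_mult B C)"
proof
  show "ideal_mult (ideal_mult A B) C \<subseteq> ideal_mult A (ideal_mult B C)"
    by (rule mult_assoc_sub[OF assms])
  have "ideal_mult A (ideal_mult B C) = ideal_mult (ideal_mult B C) A" by (rule mult_comm)
  also have "\<dots> \<subseteq> ideal_mult B (ideal_mult C A)" by (rule mult_assoc_sub) (use assms in auto)
  also have "\<dots> = ideal_mult (ideal_mult C A) B" by (rule mult_comm)
  also have "\<dots> \<subseteq> ideal_mult C (ideal_mult A B)" by (rule mult_assoc_sub) (use assms in auto)
  also have "\<dots> = ideal_mult (ideal_mult A B) C" by (rule mult_comm)
  finally show "ideal_mult A (ideal_mult B C) \<subseteq> ideal_mult (ideal_mult A B) C" .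
qed

lemma ideal_prod_ideal: "is_ideal (ideal_prod xs)"
  by (cases xs) (auto simp: ideal_prod_def is_ideal_UNIV is_ideal_mult)

lemma ideal_prod_append:
  assumes "\<forall>J\<in>set xs. is_ideal J"
  shows "ideal_prod (xs @ ys) = ideal_mult (ideal_prod xs) (ideal_prod ys)"
  using assms
proof (induction xs)
  case Nil
  then show ?case by (simp add: ideal_prod_def mult_UNIV[OF ideal_prod_ideal[unfolded ideal_prod_def]])
next
  case (Cons a xs)
  have "ideal_prod ((a # xs) @ ys) = ideal_mult a (ideal_prod (xs @ ys))"
    by (simp add: ideal_prod_def)
  also have "\<dots> = ideal_mult a (ideal_mult (ideal_prod xs) (ideal_prod ys))"
    using Cons by simp
  also have "\<dots> = ideal_mult (ideal_mult a (ideal_prod xs)) (ideal_prod ys)"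
    using Cons.prems by (intro mult_assoc[symmetric]) (auto simp: ideal_prod_ideal)
  also have "\<dots> = ideal_mult (ideal_prod (a # xs)) (ideal_prod ys)"
    by (simp add: ideal_prod_def)
  finally show ?case .
qed

lemma BF_absorb:
  fixes I J :: "'r::comm_ring_1 set"
  assumes BF: "ideals_BF TYPE('r)"
    and I: "I \<in> nz_ideals" "I \<noteq> UNIV" and J: "J \<in> nz_ideals"
    and eq: "I = ideal_mult J I"
  shows "J = UNIV"
proof (rule ccontr)
  assume JU: "J \<noteq> UNIV"
  from BF J JU obtain xs where xs: "\<forall>K\<in>set xs. ideal_atom K" "ideal_prod xs = J"
    unfolding ideals_BF_def ideal_lengths_def by blast
  from BF I obtain ys where ys: "\<forall>K\<in>set ys. ideal_atom K" "ideal_prod ys = I"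
    unfolding ideals_BF_def ideal_lengths_def by blast
  have xs_ne: "xs \<noteq> []" using xs JU by (auto simp: ideal_prod_def)
  have at_id: "ideal_atom K \<Longrightarrow> is_ideal K" for K :: "'r set"
    by (simp add: ideal_atom_def nz_ideals_def)
  define zs where "zs n = concat (replicate n xs) @ ys" for n
  have prod: "ideal_prod (zs n) = I" for n
  proof (induction n)
    case 0 then show ?case using ys by (simp add: zs_def)
  next
    case (Suc n)
    have "ideal_prod (zs (Suc n)) = ideal_prod (xs @ zs n)" by (simp add: zs_def)
    also have "\<dots> = ideal_mult J I"
      using xs Suc at_id by (subst ideal_prod_append) auto
    finally show ?case using eq by simp
  qed
  have atoms: "\<forall>K\<in>set (zs n). ideal_atom K" for n
    using xs ys by (auto simp: zs_def)
  have "length (zs n) \<in> ideal_lengths I" for n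
    unfolding ideal_lengths_def using prod atoms by blast
  moreover have "n \<le> length (zs n)" for n
  proof -
    have "length (concat (replicate n xs)) = n * length xs"
      by (induction n) auto
    then show ?thesis using xs_ne by (simp add: zs_def) (metis le_add1 length_greater_0_conv mult_le_mono1 nat_mult_1 One_nat_def Suc_leI trans_le_add1 mult.commute)
  qed
  ultimately have "\<not> finite (ideal_lengths I)"
    by (metis finite_nat_set_iff_bounded_le le_trans not_less_eq_eq)
  then show False using BF I unfolding ideals_BF_def by blast
qed

section \<open>A ring homomorphism to 'a poly poly\<close>

definition tdeg :: "('n::finite \<Rightarrow>\<^sub>0 nat) \<Rightarrow> nat" where
  "tdeg \<mu> = (\<Sum>i\<in>UNIV. Poly_Mapping.lookup \<mu> i)"

lemma tdeg_add: "tdeg (\<mu> + \<nu>) = tdeg \<mu> + tdeg \<nu>"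
  unfolding tdeg_def by (simp add: lookup_add sum.distrib)

lemma tdeg_0_iff: "tdeg \<mu> = 0 \<longleftrightarrow> \<mu> = 0"
proof
  assume "tdeg \<mu> = 0"
  then have "\<forall>i. Poly_Mapping.lookup \<mu> i = 0" unfolding tdeg_def by simp
  then show "\<mu> = 0" by (intro poly_mapping_eqI) simp
qed (simp add: tdeg_def)

lemma lookup_le_tdeg: "Poly_Mapping.lookup \<mu> i \<le> tdeg \<mu>"
  unfolding tdeg_def by (rule member_le_sum) auto

definition hm :: "'n \<Rightarrow> ('n::finite \<Rightarrow>\<^sub>0 nat) \<Rightarrow> 'a::comm_ring_1 \<Rightarrow> 'a poly poly" where
  "hm y \<mu> c = monom (monom c (Poly_Mapping.lookup \<mu> y)) (tdeg \<mu>)"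

definition hh :: "'n \<Rightarrow> ('n::finite, 'a::comm_ring_1) mpoly \<Rightarrow> 'a poly poly" where
  "hh y f = (\<Sum>\<mu>\<in>Poly_Mapping.keys f. hm y \<mu> (Poly_Mapping.lookup f \<mu>))"

lemma hm_0 [simp]: "hm y \<mu> 0 = 0"
  by (simp add: hm_def)

lemma hm_add: "hm y \<mu> (a + b) = hm y \<mu> a + hm y \<mu> b"
  by (simp add: hm_def add_monom)

lemma hm_mult: "hm y \<mu> a * hm y \<nu> b = hm y (\<mu> + \<nu>) (a * b)"
  by (simp add: hm_def mult_monom lookup_add tdeg_add)

lemma hh_add: "hh y (f + g) = hh y f + hh y g"
  unfolding hh_def by (rule setsum_keys_plus_distrib) (simp_all add: hm_add)

lemma hh_zero [simp]: "hh y 0 = 0"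
  by (simp add: hh_def)

lemma hh_single: "hh y (Poly_Mapping.single \<mu> c) = hm y \<mu> c"
  by (cases "c = 0") (simp_all add: hh_def)

lemma update_eq: "a \<notin> Poly_Mapping.keys f \<Longrightarrow>
    Poly_Mapping.update a b f = f + Poly_Mapping.single a b"
  by (rule poly_mapping_eqI) (auto simp: lookup_update lookup_add lookup_single in_keys_iff)

lemma hh_mult_single: "hh y (Poly_Mapping.single \<mu> c * g) = hm y \<mu> c * hh y g"
proof (induction g rule: Poly_Mapping.update_induct)
  case const
  then show ?case by simp
next
  case (update a b g)
  then show ?case
    by (simp add: update_eq distrib_left hh_add mult_single hh_single hm_mult)
qed

lemma hh_mult: "hh y (f * g) = hh y f * hh y g"
proof (induction f rule: Poly_Mapping.update_induct)
  case const
  then show ?case by simp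
next
  case (update a b f)
  then show ?case
    by (simp add: update_eq distrib_right hh_add hh_mult_single hh_single)
qed

lemma hh_uminus: "hh y (- f) = - hh y f"
  using hh_add[of y f "-f"] minus_unique[of "hh y f" "hh y (-f)"] by simp

lemma hh_diff: "hh y (f - g) = hh y f - hh y g"
  using hh_add[of y f "-g"] hh_uminus[of y g] by simp

lemma hh_sum_list: "hh y (sum_list xs) = sum_list (map (hh y) xs)"
  by (induction xs) (simp_all add: hh_add)

lemma hh_const_mult: "hh y (Poly_Mapping.single 0 c * f) = [:[:c:]:] * hh y f"
  by (simp add: hh_mult_single hm_def tdeg_def monom_0)

lemma coeff_hh: "coeff (hh y f) k =
   (\<Sum>\<mu>\<in>{\<mu>\<in>Poly_Mapping.keys f. tdeg \<mu> = k}. monom (Poly_Mapping.lookup f \<mu>) (Poly_Mapping.lookup \<mu> y))"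
  unfolding hh_def coeff_sum hm_def coeff_monom
  by (rule sum.mono_neutral_cong_right) auto

lemma coeff_coeff_hh: "coeff (coeff (hh y f) k) j =
   (\<Sum>\<mu>\<in>{\<mu>\<in>Poly_Mapping.keys f. tdeg \<mu> = k \<and> Poly_Mapping.lookup \<mu> y = j}. Poly_Mapping.lookup f \<mu>)"
  unfolding coeff_hh coeff_sum coeff_monom
  by (rule sum.mono_neutral_cong_right) auto

lemma degree_coeff_hh: "degree (coeff (hh y f) k) \<le> k"
proof -
  have "degree (coeff (hh y f) k) \<le> Max (insert 0 ((\<lambda>\<mu>. degree (monom (Poly_Mapping.lookup f \<mu>) (Poly_Mapping.lookup \<mu> y))) ` {\<mu>\<in>Poly_Mapping.keys f. tdeg \<mu> = k}))"
    unfolding coeff_hh by (rule degree_sum_le) auto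
  also have "\<dots> \<le> k"
    by (intro Max.boundedI) (auto intro: order.trans[OF degree_monom_le] simp: lookup_le_tdeg)
  finally show ?thesis .
qed

lemma coeff_hh_0: "coeff (hh y f) 0 = [:Poly_Mapping.lookup f 0:]"
proof -
  have "{\<mu>\<in>Poly_Mapping.keys f. tdeg \<mu> = 0} = (if Poly_Mapping.lookup f 0 = 0 then {} else {0})"
    by (auto simp: tdeg_0_iff in_keys_iff)
  then show ?thesis unfolding coeff_hh by (auto simp: monom_0)
qed

section \<open>Monomial structure of I_B\<close>

lemma tdeg_single: "tdeg (Poly_Mapping.single x a) = a"
  unfolding tdeg_def by (simp add: lookup_single when_def)

definition gen :: "'n \<Rightarrow> 'n \<Rightarrow> nat \<Rightarrow> nat \<Rightarrow> ('n \<Rightarrow>\<^sub>0 nat)" where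
  "gen x y m n = Poly_Mapping.single x (m - n) + Poly_Mapping.single y n"

definition UU :: "'n \<Rightarrow> 'n \<Rightarrow> nat set \<Rightarrow> ('n \<Rightarrow>\<^sub>0 nat) set" where
  "UU x y B = {\<mu>. \<exists>n\<in>B. \<exists>\<nu>. \<mu> = gen x y (Max B) n + \<nu>}"

lemma tdeg_gen: "n \<le> m \<Longrightarrow> tdeg (gen x y m n :: 'n::finite \<Rightarrow>\<^sub>0 nat) = m"
  by (simp add: gen_def tdeg_add tdeg_single)

lemma lookup_gen_y: "x \<noteq> y \<Longrightarrow> Poly_Mapping.lookup (gen x y m n) y = n"
  by (simp add: gen_def lookup_add lookup_single when_def)

lemma poly_mapping_sum_singles:
  "f = (\<Sum>\<mu>\<in>Poly_Mapping.keys f. Poly_Mapping.single \<mu> (Poly_Mapping.lookup f \<mu>))"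
proof (rule poly_mapping_eqI)
  fix k
  have "(\<Sum>\<mu>\<in>Poly_Mapping.keys f. (Poly_Mapping.lookup f \<mu> when \<mu> = k)) =
        (\<Sum>\<mu>\<in>Poly_Mapping.keys f. (if \<mu> = k then Poly_Mapping.lookup f \<mu> else 0))"
    by (simp add: when_def)
  also have "\<dots> = Poly_Mapping.lookup f k"
    by (simp add: sum.delta in_keys_iff)
  finally show "Poly_Mapping.lookup f k =
    Poly_Mapping.lookup (\<Sum>\<mu>\<in>Poly_Mapping.keys f. Poly_Mapping.single \<mu> (Poly_Mapping.lookup f \<mu>)) k"
    by (simp add: lookup_sum lookup_single)
qed

lemma monideal_is_ideal:
  assumes up: "\<And>\<mu> \<nu>. \<mu> \<in> U \<Longrightarrow> \<nu> + \<mu> \<in> U"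
  shows "is_ideal {f :: ('n, 'a::comm_ring_1) mpoly. Poly_Mapping.keys f \<subseteq> U}"
  unfolding is_ideal_def
proof (intro conjI ballI allI)
  fix a b :: "('n, 'a) mpoly"
  assume "a \<in> {f. Poly_Mapping.keys f \<subseteq> U}" "b \<in> {f. Poly_Mapping.keys f \<subseteq> U}"
  then show "a + b \<in> {f. Poly_Mapping.keys f \<subseteq> U}" using keys_add[of a b] by auto
next
  fix r a :: "('n, 'a) mpoly"
  assume "a \<in> {f. Poly_Mapping.keys f \<subseteq> U}"
  then show "r * a \<in> {f. Poly_Mapping.keys f \<subseteq> U}" using keys_mult[of r a] up by blast
qed simp

lemma IB_char:
  assumes "finite B"
  shows "(I_B x y B :: ('n::finite, 'a::comm_ring_1) mpoly set) = {f. Poly_Mapping.keys f \<subseteq> UU x y B}"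
proof
  have up: "\<nu> + \<mu> \<in> UU x y B" if hmu: "\<mu> \<in> UU x y B" for \<mu> \<nu>
  proof -
    obtain n \<nu>' where n: "n \<in> B" "\<mu> = gen x y (Max B) n + \<nu>'" using hmu by (auto simp: UU_def)
    then have "\<nu> + \<mu> = gen x y (Max B) n + (\<nu> + \<nu>')" by (simp add: add_ac)
    then show ?thesis using n(1) unfolding UU_def by blast
  qed
  show "(I_B x y B :: ('n, 'a) mpoly set) \<subseteq> {f. Poly_Mapping.keys f \<subseteq> UU x y B}"
    unfolding I_B_def
  proof (rule gen_least[OF monideal_is_ideal[OF up]], assumption, safe)
    fix n k assume "n \<in> B" "k \<in> Poly_Mapping.keys (monXY x y (Max B - n) n :: ('n, 'a) mpoly)"
    then show "k \<in> UU x y B"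
      unfolding monXY_def UU_def gen_def by (auto split: if_splits intro!: bexI[of _ n] exI[of _ 0])
  qed
  show "{f. Poly_Mapping.keys f \<subseteq> UU x y B} \<subseteq> (I_B x y B :: ('n, 'a) mpoly set)"
  proof safe
    fix f :: "('n, 'a) mpoly" assume f: "Poly_Mapping.keys f \<subseteq> UU x y B"
    have isI: "is_ideal (I_B x y B :: ('n, 'a) mpoly set)" unfolding I_B_def by (rule is_ideal_gen)
    have "(\<Sum>\<mu>\<in>Poly_Mapping.keys f. Poly_Mapping.single \<mu> (Poly_Mapping.lookup f \<mu>)) \<in> I_B x y B"
    proof (rule ideal_sum[OF isI])
      fix \<mu> assume "\<mu> \<in> Poly_Mapping.keys f"
      with f obtain n \<nu> where n: "n \<in> B" "\<mu> = gen x y (Max B) n + \<nu>" unfolding UU_def by auto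
      have g: "(monXY x y (Max B - n) n :: ('n, 'a) mpoly) \<in> I_B x y B"
        unfolding I_B_def using n(1) by (intro subsetD[OF gen_sub]) blast
      have "Poly_Mapping.single \<mu> (Poly_Mapping.lookup f \<mu>) =
          Poly_Mapping.single \<nu> (Poly_Mapping.lookup f \<mu>) * monXY x y (Max B - n) n"
        unfolding monXY_def n(2) gen_def by (simp add: mult_single add_ac)
      also have "\<dots> \<in> I_B x y B"
        by (rule ideal_mul[OF isI g])
      finally show "Poly_Mapping.single \<mu> (Poly_Mapping.lookup f \<mu>) \<in> I_B x y B" .
    qed
    then show "f \<in> I_B x y B" using poly_mapping_sum_singles[of f] by simp
  qed
qed

lemma UU_tdeg:
  assumes "finite B" "\<mu> \<in> UU x y B"
  shows "Max B \<le> tdeg (\<mu> :: 'n::finite \<Rightarrow>\<^sub>0 nat)"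
proof -
  obtain n \<nu> where n: "n \<in> B" "\<mu> = gen x y (Max B) n + \<nu>" using assms(2) by (auto simp: UU_def)
  have "n \<le> Max B" using n(1) assms(1) by simp
  then show ?thesis using n by (simp add: tdeg_add tdeg_gen)
qed

lemma UU_tdeg_eq:
  assumes "finite B" "x \<noteq> y" "\<mu> \<in> UU x y B" "tdeg (\<mu> :: 'n::finite \<Rightarrow>\<^sub>0 nat) = Max B"
  shows "Poly_Mapping.lookup \<mu> y \<in> B"
proof -
  obtain n \<nu> where n: "n \<in> B" "\<mu> = gen x y (Max B) n + \<nu>" using assms(3) by (auto simp: UU_def)
  have "n \<le> Max B" using n(1) assms(1) by simp
  then have "tdeg \<nu> = 0" using n assms(4) by (simp add: tdeg_add tdeg_gen)
  then have "\<nu> = 0" by (simp add: tdeg_0_iff)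
  then show ?thesis using n assms(2) by (simp add: lookup_gen_y)
qed

lemma I_low:
  assumes "finite B" "f \<in> (I_B x y B :: ('n::finite, 'a::comm_ring_1) mpoly set)" "k < Max B"
  shows "coeff (hh y f) k = 0"
proof -
  have e: "{\<mu>\<in>Poly_Mapping.keys f. tdeg \<mu> = k} = {}"
    using assms UU_tdeg[OF assms(1)] by (force simp: IB_char)
  show ?thesis unfolding coeff_hh e by simp
qed

lemma I_mid:
  assumes "finite B" "x \<noteq> y" "f \<in> (I_B x y B :: ('n::finite, 'a::comm_ring_1) mpoly set)"
    "coeff (coeff (hh y f) (Max B)) j \<noteq> 0"
  shows "j \<in> B"
proof -
  from assms(4) obtain \<mu> where "\<mu> \<in> Poly_Mapping.keys f" "tdeg \<mu> = Max B" "Poly_Mapping.lookup \<mu> y = j"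
    unfolding coeff_coeff_hh by (metis (mono_tags, lifting) mem_Collect_eq sum.neutral)
  then show ?thesis using assms(1-3) UU_tdeg_eq[OF assms(1) assms(2)] by (auto simp: IB_char)
qed

lemma one_notin:
  assumes "finite B" "0 < Max B"
  shows "(1 :: ('n::finite, 'a::idom) mpoly) \<notin> I_B x y B"
proof
  assume "(1 :: ('n, 'a) mpoly) \<in> I_B x y B"
  then have "(0 :: 'n \<Rightarrow>\<^sub>0 nat) \<in> UU x y B" by (simp add: IB_char[OF assms(1)])
  then have "Max B \<le> tdeg (0 :: 'n \<Rightarrow>\<^sub>0 nat)" by (rule UU_tdeg[OF assms(1)])
  then show False using assms(2) by (simp add: tdeg_def)
qed

lemma gen_in:
  assumes "n \<in> B"
  shows "(monXY x y (Max B - n) n :: ('n::finite, 'a::comm_ring_1) mpoly) \<in> I_B x y B"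
  unfolding I_B_def using assms by (intro subsetD[OF gen_sub]) blast

lemma hh_monXY: "x \<noteq> y \<Longrightarrow> hh y (monXY x y i j :: ('n::finite, 'a::comm_ring_1) mpoly) = monom (monom 1 j) (i + j)"
  by (simp add: monXY_def hh_single hm_def lookup_add lookup_single when_def tdeg_add tdeg_single)

definition restr :: "(('n \<Rightarrow>\<^sub>0 nat) \<Rightarrow> bool) \<Rightarrow> ('n, 'a::comm_ring_1) mpoly \<Rightarrow> ('n, 'a) mpoly" where
  "restr P g = (\<Sum>\<mu>\<in>{\<mu>\<in>Poly_Mapping.keys g. P \<mu>}. Poly_Mapping.single \<mu> (Poly_Mapping.lookup g \<mu>))"

lemma lookup_restr: "Poly_Mapping.lookup (restr P g) k = (if P k then Poly_Mapping.lookup g k else 0)"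
proof -
  have "Poly_Mapping.lookup (restr P g) k =
     (\<Sum>\<mu>\<in>{\<mu>\<in>Poly_Mapping.keys g. P \<mu>}. (if \<mu> = k then Poly_Mapping.lookup g \<mu> else 0))"
    unfolding restr_def lookup_sum by (simp add: lookup_single when_def)
  also have "\<dots> = (if P k then Poly_Mapping.lookup g k else 0)"
    by (simp add: sum.delta in_keys_iff)
  finally show ?thesis .
qed

lemma lookup_const_mult: "Poly_Mapping.lookup (Poly_Mapping.single 0 c * g) k = c * Poly_Mapping.lookup g k"
proof (induction g rule: Poly_Mapping.update_induct)
  case const then show ?case by simp
next
  case (update a b g)
  then show ?case
    by (simp add: update_eq distrib_left mult_single lookup_add lookup_single when_def algebra_simps)
qed

lemma absorb:
  assumes B: "finite B" and fg: "f0 * g \<in> (I_B x y B :: ('n::finite, 'a::idom) mpoly set)"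
    and c: "Poly_Mapping.lookup f0 0 \<noteq> 0"
  shows "g \<in> I_B x y B"
proof (rule ccontr)
  assume gn: "g \<notin> I_B x y B"
  let ?U = "UU x y B"
  have isI: "is_ideal (I_B x y B :: ('n, 'a) mpoly set)" unfolding I_B_def by (rule is_ideal_gen)
  define g2 where "g2 = restr (\<lambda>\<mu>. \<mu> \<notin> ?U) g"
  define g1 where "g1 = g - g2"
  have "Poly_Mapping.keys g1 \<subseteq> ?U"
    by (auto simp: g1_def g2_def in_keys_iff lookup_minus lookup_restr split: if_splits)
  then have g1I: "g1 \<in> I_B x y B" by (simp add: IB_char[OF B])
  have "f0 * g2 = f0 * g - f0 * g1" by (simp add: g1_def algebra_simps)
  also have "\<dots> \<in> I_B x y B" by (rule ideal_diff[OF isI fg ideal_mul[OF isI g1I]])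
  finally have f0g2: "Poly_Mapping.keys (f0 * g2) \<subseteq> ?U" by (simp add: IB_char[OF B])
  from gn obtain k where "k \<in> Poly_Mapping.keys g" "k \<notin> ?U" by (auto simp: IB_char[OF B])
  then have "k \<in> Poly_Mapping.keys g2" by (simp add: g2_def in_keys_iff lookup_restr)
  then obtain \<mu> where mu: "\<mu> \<in> Poly_Mapping.keys g2" and mumin: "\<And>\<nu>. \<nu> \<in> Poly_Mapping.keys g2 \<Longrightarrow> tdeg \<mu> \<le> tdeg \<nu>"
    using ex_has_least_nat[of "\<lambda>\<mu>. \<mu> \<in> Poly_Mapping.keys g2" k tdeg] by blast
  have muU: "\<mu> \<notin> ?U" using mu by (simp add: g2_def in_keys_iff lookup_restr split: if_splits)
  define c0 where "c0 = Poly_Mapping.lookup f0 0"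
  define f' where "f' = f0 - Poly_Mapping.single 0 c0"
  have f'0: "0 \<notin> Poly_Mapping.keys f'" by (simp add: f'_def in_keys_iff lookup_minus c0_def)
  have "\<mu> \<notin> Poly_Mapping.keys (f' * g2)"
  proof
    assume "\<mu> \<in> Poly_Mapping.keys (f' * g2)"
    then obtain a b where ab: "a \<in> Poly_Mapping.keys f'" "b \<in> Poly_Mapping.keys g2" "\<mu> = a + b"
      using keys_mult[of f' g2] by blast
    have "a \<noteq> 0" using ab(1) f'0 by auto
    then have "tdeg a > 0" using tdeg_0_iff[of a] by linarith
    moreover have "tdeg \<mu> \<le> tdeg b" using mumin ab(2) by simp
    ultimately show False using ab(3) by (simp add: tdeg_add)
  qed
  then have "Poly_Mapping.lookup (f' * g2) \<mu> = 0" by (simp add: in_keys_iff)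
  moreover have "f0 * g2 = Poly_Mapping.single 0 c0 * g2 + f' * g2" by (simp add: f'_def algebra_simps)
  ultimately have "Poly_Mapping.lookup (f0 * g2) \<mu> = c0 * Poly_Mapping.lookup g2 \<mu>"
    by (simp add: lookup_add lookup_const_mult)
  also have "\<dots> \<noteq> 0" using c mu by (simp add: c0_def in_keys_iff)
  finally have "\<mu> \<in> Poly_Mapping.keys (f0 * g2)" by (simp add: in_keys_iff)
  then show False using f0g2 muU by auto
qed

section \<open>Univariate polynomial lemmas\<close>

lemma coeff_mult_low:
  fixes p q :: "'a::comm_semiring_0 poly"
  assumes "\<forall>k<a. coeff p k = 0" "\<forall>k<b. coeff q k = 0"
  shows "coeff (p * q) (a + b) = coeff p a * coeff q b"
proof -
  have "coeff (p * q) (a + b) = (\<Sum>i\<le>a + b. if i = a then coeff p a * coeff q b else 0)"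
    unfolding coeff_mult
  proof (rule sum.cong[OF refl])
    fix i assume "i \<in> {..a + b}"
    show "coeff p i * coeff q (a + b - i) = (if i = a then coeff p a * coeff q b else 0)"
    proof (cases "i < a")
      case True then show ?thesis using assms by simp
    next
      case False
      then show ?thesis using assms \<open>i \<in> {..a + b}\<close> by (cases "i = a") auto
    qed
  qed
  also have "\<dots> = coeff p a * coeff q b" by (simp add: sum.delta')
  finally show ?thesis .
qed

lemma coeff_mult_below:
  fixes p q :: "'a::comm_semiring_0 poly"
  assumes "\<forall>k<a. coeff p k = 0" "\<forall>k<b. coeff q k = 0" "n < a + b"
  shows "coeff (p * q) n = 0"
  unfolding coeff_mult
proof (rule sum.neutral, rule ballI)
  fix i assume "i \<in> {..n}"
  show "coeff p i * coeff q (n - i) = 0"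
    using assms \<open>i \<in> {..n}\<close> by (cases "i < a") auto
qed

lemma coeff_mult_top:
  fixes p q :: "'a::comm_semiring_0 poly"
  assumes "degree p \<le> a" "degree q \<le> b"
  shows "coeff (p * q) (a + b) = coeff p a * coeff q b"
proof -
  have "coeff (p * q) (a + b) = (\<Sum>i\<le>a + b. if i = a then coeff p a * coeff q b else 0)"
    unfolding coeff_mult
  proof (rule sum.cong[OF refl])
    fix i assume "i \<in> {..a + b}"
    show "coeff p i * coeff q (a + b - i) = (if i = a then coeff p a * coeff q b else 0)"
    proof (cases "i < a")
      case True then show ?thesis using assms by (simp add: coeff_eq_0)
    next
      case False
      then show ?thesis using assms by (cases "i = a") (auto simp: coeff_eq_0)
    qed
  qed
  also have "\<dots> = coeff p a * coeff q b" by (simp add: sum.delta')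
  finally show ?thesis .
qed

lemma coeff_sum_list: "coeff (sum_list xs) n = sum_list (map (\<lambda>z. coeff z n) xs)"
  by (induction xs) auto

lemma sum_list_nonzero: "sum_list xs \<noteq> (0::'b::monoid_add) \<Longrightarrow> \<exists>z\<in>set xs. z \<noteq> 0"
  by (induction xs) auto

lemma pairs_top:
  fixes zs :: "('a::idom poly \<times> 'a poly) list"
  assumes "\<forall>(P,Q)\<in>set zs. degree P \<le> a \<and> degree Q \<le> b"
    "coeff (sum_list (map (\<lambda>(P,Q). P * Q) zs)) (a + b) \<noteq> 0"
  shows "\<exists>(P,Q)\<in>set zs. coeff P a \<noteq> 0 \<and> coeff Q b \<noteq> 0"
proof -
  have "sum_list (map (\<lambda>z. coeff (fst z * snd z) (a + b)) zs) \<noteq> 0"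
    using assms(2) by (simp add: coeff_sum_list o_def case_prod_beta)
  then obtain z where z: "z \<in> set (map (\<lambda>z. coeff (fst z * snd z) (a + b)) zs)" "z \<noteq> 0"
    using sum_list_nonzero by blast
  then obtain P Q where "(P,Q) \<in> set zs" "coeff (P * Q) (a + b) \<noteq> 0" by auto
  then show ?thesis using assms(1) coeff_mult_top[of P a Q b] by fastforce
qed

lemma pairs_bot:
  fixes zs :: "('a::idom poly \<times> 'a poly) list"
  assumes "coeff (sum_list (map (\<lambda>(P,Q). P * Q) zs)) 0 \<noteq> 0"
  shows "\<exists>(P,Q)\<in>set zs. coeff P 0 \<noteq> 0 \<and> coeff Q 0 \<noteq> 0"
proof -
  have "sum_list (map (\<lambda>z. coeff (fst z * snd z) 0) zs) \<noteq> 0"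
    using assms by (simp add: coeff_sum_list o_def case_prod_beta)
  then obtain z where z: "z \<in> set (map (\<lambda>z. coeff (fst z * snd z) 0) zs)" "z \<noteq> 0"
    using sum_list_nonzero by blast
  then obtain P Q where "(P,Q) \<in> set zs" "coeff (P * Q) 0 \<noteq> 0" by auto
  then show ?thesis by (auto simp: coeff_mult_0)
qed

definition lo :: "'a::zero poly \<Rightarrow> nat" where
  "lo p = (LEAST k. coeff p k \<noteq> 0)"

lemma lo_coeff: "p \<noteq> 0 \<Longrightarrow> coeff p (lo p) \<noteq> 0"
  unfolding lo_def by (rule LeastI_ex) (metis leading_coeff_neq_0)

lemma lo_below: "k < lo p \<Longrightarrow> coeff p k = 0"
  unfolding lo_def using not_less_Least by blast

lemma lo_mult:
  fixes p q :: "'a::idom poly"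
  assumes "p \<noteq> 0" "q \<noteq> 0"
  shows "coeff (p * q) (lo p + lo q) \<noteq> 0"
  using coeff_mult_low[of "lo p" p "lo q" q] lo_below[of _ p] lo_below[of _ q] lo_coeff[OF assms(1)] lo_coeff[OF assms(2)]
  by auto

section \<open>The combinatorial core\<close>

lemma core1:
  fixes V :: "'a::idom poly set"
  assumes Vadd: "\<And>P P'. P \<in> V \<Longrightarrow> P' \<in> V \<Longrightarrow> P + P' \<in> V"
    and Vsm: "\<And>c P. P \<in> V \<Longrightarrow> smult c P \<in> V"
    and lo0: "\<And>P. P \<in> V \<Longrightarrow> P \<noteq> 0 \<Longrightarrow> coeff P 0 \<noteq> 0"
    and ps: "\<forall>(P,Q)\<in>set ps. P \<in> V" "sum_list (map (\<lambda>(P,Q). P * Q) ps) = 1"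
    and P2: "P2 \<in> V" "coeff P2 a \<noteq> 0" "0 < a"
  shows False
proof -
  have "coeff (sum_list (map (\<lambda>(P,Q). P * Q) ps)) 0 \<noteq> 0" using ps(2) by simp
  then obtain P1 Q1 where P1: "(P1, Q1) \<in> set ps" "coeff P1 0 \<noteq> 0" using pairs_bot by blast
  define c where "c = coeff P1 0"
  have P1V: "P1 \<in> V" using P1(1) ps(1) by auto
  have key: "smult c P = smult (coeff P 0) P1" if PV: "P \<in> V" for P
  proof -
    let ?D = "smult c P + smult (- coeff P 0) P1"
    have "?D \<in> V" using PV P1V by (intro Vadd Vsm)
    moreover have "coeff ?D 0 = 0" by (simp add: c_def algebra_simps)
    ultimately have "?D = 0" using lo0 by blast
    then show ?thesis by (simp add: algebra_simps eq_neg_iff_add_eq_0)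
  qed
  have gen: "set qs \<subseteq> set ps \<Longrightarrow> smult c (sum_list (map (\<lambda>(P,Q). P * Q) qs)) =
       P1 * sum_list (map (\<lambda>(P,Q). smult (coeff P 0) Q) qs)" for qs
  proof (induction qs)
    case Nil then show ?case by simp
  next
    case (Cons pq qs)
    obtain P Q where pq: "pq = (P, Q)" by (cases pq)
    have PV: "P \<in> V" using Cons.prems pq ps(1) by auto
    have "smult c (sum_list (map (\<lambda>(P,Q). P * Q) (pq # qs))) =
        smult c P * Q + smult c (sum_list (map (\<lambda>(P,Q). P * Q) qs))"
      by (simp add: pq smult_add_right)
    also have "\<dots> = smult (coeff P 0) P1 * Q + P1 * sum_list (map (\<lambda>(P,Q). smult (coeff P 0) Q) qs)"
      using Cons key[OF PV] by simp
    also have "\<dots> = P1 * sum_list (map (\<lambda>(P,Q). smult (coeff P 0) Q) (pq # qs))"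
      by (simp add: pq algebra_simps)
    finally show ?case .
  qed
  have "[:c:] = P1 * sum_list (map (\<lambda>(P,Q). smult (coeff P 0) Q) ps)"
    using gen[of ps] ps(2) by simp
  moreover have "c \<noteq> 0" using P1 by (simp add: c_def)
  ultimately have "degree P1 = 0"
    by (metis degree_mult_eq degree_pCons_0 add_is_0 mult_zero_left mult_zero_right pCons_eq_0_iff)
  have "coeff (smult c P2) a = coeff (smult (coeff P2 0) P1) a" using key[OF P2(1)] by simp
  also have "\<dots> = 0" using \<open>degree P1 = 0\<close> P2(3) by (simp add: coeff_eq_0)
  finally show False using \<open>c \<noteq> 0\<close> P2(2) by simp
qed

lemma core:
  fixes V W :: "'a::idom poly set"
  assumes Vadd: "\<And>P P'. P \<in> V \<Longrightarrow> P' \<in> V \<Longrightarrow> P + P' \<in> V"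
    and Vsm: "\<And>c P. P \<in> V \<Longrightarrow> smult c P \<in> V"
    and Wadd: "\<And>Q Q'. Q \<in> W \<Longrightarrow> Q' \<in> W \<Longrightarrow> Q + Q' \<in> W"
    and Wsm: "\<And>c Q. Q \<in> W \<Longrightarrow> smult c Q \<in> W"
    and supp: "\<And>P Q k. P \<in> V \<Longrightarrow> Q \<in> W \<Longrightarrow> coeff (P * Q) k \<noteq> 0 \<Longrightarrow> k \<in> insert 0 A"
    and sf: "sum_free A"
    and ps: "\<forall>(P,Q)\<in>set ps. P \<in> V \<and> Q \<in> W" "sum_list (map (\<lambda>(P,Q). P * Q) ps) = 1"
    and P2: "P2 \<in> V" "coeff P2 a \<noteq> 0" "0 < a"
    and Q2: "Q2 \<in> W" "coeff Q2 b \<noteq> 0" "0 < b"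
  shows False
proof -
  have "coeff (sum_list (map (\<lambda>(P,Q). P * Q) ps)) 0 \<noteq> 0" using ps(2) by simp
  then obtain P1 Q1 where P1: "(P1, Q1) \<in> set ps" "coeff P1 0 \<noteq> 0" "coeff Q1 0 \<noteq> 0"
    using pairs_bot by blast
  have P1V: "P1 \<in> V" and Q1W: "Q1 \<in> W" using P1(1) ps(1) by auto
  have P1n: "P1 \<noteq> 0" and Q1n: "Q1 \<noteq> 0" using P1 by auto
  have lo1: "lo P1 = 0" "lo Q1 = 0" using P1(2,3) lo_below by (metis neq0_conv)+
  have loV: "lo P \<in> insert 0 A" if "P \<in> V" "P \<noteq> 0" for P
    using supp[OF that(1) Q1W] lo_mult[OF that(2) Q1n] lo1 by simp
  have loW: "lo Q \<in> insert 0 A" if "Q \<in> W" "Q \<noteq> 0" for Q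
    using supp[OF P1V that(1)] lo_mult[OF P1n that(2)] lo1 by simp
  have loVW: "lo P + lo Q \<in> insert 0 A" if "P \<in> V" "P \<noteq> 0" "Q \<in> W" "Q \<noteq> 0" for P Q
    using supp[OF that(1) that(3) lo_mult[OF that(2) that(4)]] .
  have lo_zero_coeff: "coeff P 0 \<noteq> 0" if "P \<noteq> 0" "lo P = 0" for P :: "'a poly"
    using lo_coeff[OF that(1)] that(2) by simp
  have "(\<forall>P\<in>V. P \<noteq> 0 \<longrightarrow> lo P = 0) \<or> (\<forall>Q\<in>W. Q \<noteq> 0 \<longrightarrow> lo Q = 0)"
  proof (rule ccontr)
    assume "\<not> ?thesis"
    then obtain P Q where PQ: "P \<in> V" "P \<noteq> 0" "lo P \<noteq> 0" "Q \<in> W" "Q \<noteq> 0" "lo Q \<noteq> 0" by blast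
    have "lo P \<in> A" "lo Q \<in> A" "lo P + lo Q \<in> A" using loV[OF PQ(1,2)] loW[OF PQ(4,5)] loVW[OF PQ(1,2,4,5)] PQ(3,6)
      by auto
    then show False using sf unfolding sum_free_def by blast
  qed
  then show False
  proof
    assume h: "\<forall>P\<in>V. P \<noteq> 0 \<longrightarrow> lo P = 0"
    show False
      by (rule core1[OF Vadd Vsm _ _ ps(2) P2]) (use h lo_zero_coeff ps(1) in auto)
  next
    assume h: "\<forall>Q\<in>W. Q \<noteq> 0 \<longrightarrow> lo Q = 0"
    let ?qs = "map (\<lambda>(P,Q). (Q,P)) ps"
    have "sum_list (map (\<lambda>(P,Q). P * Q) ?qs) = sum_list (map (\<lambda>(P,Q). P * Q) ps)"
      by (induction ps) (auto simp: mult.commute)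
    then have qs: "sum_list (map (\<lambda>(P,Q). P * Q) ?qs) = 1" using ps(2) by simp
    show False
      by (rule core1[OF Wadd Wsm _ _ qs Q2]) (use h lo_zero_coeff ps(1) in auto)
  qed
qed

lemma sum_list_zero: "(\<forall>z\<in>set xs. f z = 0) \<Longrightarrow> sum_list (map f xs) = (0::'b::monoid_add)"
  by (induction xs) auto

lemma hh_sumprod: "hh y (sum_list (map (\<lambda>(f,g). f * g) zs)) = sum_list (map (\<lambda>(f,g). hh y f * hh y g) zs)"
  by (induction zs) (auto simp: hh_add hh_mult)

theorem theorem3p3:
  fixes x y :: "'n::finite"
  assumes "card (UNIV :: 'n set) \<ge> 2"
    and "x \<noteq> y"
    and "ideals_BF TYPE(('n, 'a::idom) mpoly)"
    and "finite A" and "A \<noteq> {}" and "sum_free A"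
  shows "ideal_atom (I_B x y (insert 0 A) :: ('n, 'a) mpoly set)"
proof -
  note xy = assms(2) and BF = assms(3) and sf = assms(6)
  define B where "B = insert 0 A"
  define m where "m = Max B"
  have Bfin: "finite B" using assms(4) by (simp add: B_def)
  have A0: "0 \<notin> A" using sf unfolding sum_free_def by force
  obtain a0 where a0: "a0 \<in> A" using assms(5) by blast
  have mpos: "0 < m"
  proof -
    have "a0 \<le> m" using a0 Bfin by (simp add: m_def B_def)
    moreover have "a0 \<noteq> 0" using a0 A0 by metis
    ultimately show ?thesis by simp
  qed
  have mB: "m \<in> B" unfolding m_def by (rule Max_in[OF Bfin]) (simp add: B_def)
  have B0: "0 \<in> B" by (simp add: B_def)
  define I where "I = (I_B x y B :: ('n, 'a) mpoly set)"
  have isI: "is_ideal I" unfolding I_def I_B_def by (rule is_ideal_gen)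
  define Xm where "Xm = (monXY x y m 0 :: ('n, 'a) mpoly)"
  define Ym where "Ym = (monXY x y 0 m :: ('n, 'a) mpoly)"
  have XmI: "Xm \<in> I" using gen_in[OF B0, of x y] by (simp add: I_def Xm_def m_def)
  have YmI: "Ym \<in> I" using gen_in[OF mB, of x y] by (simp add: I_def Ym_def m_def)
  have hXm: "hh y Xm = monom 1 m" using hh_monXY[OF xy, of m 0] by (simp add: Xm_def monom_0 one_pCons)
  have hYm: "hh y Ym = monom (monom 1 m) m" using hh_monXY[OF xy, of 0 m] by (simp add: Ym_def)
  have Xm0: "Xm \<noteq> 0" using hXm by (metis hh_zero monom_eq_0_iff one_neq_zero)
  have Inz: "I \<in> nz_ideals" unfolding nz_ideals_def using isI XmI Xm0 by auto
  have IU: "I \<noteq> UNIV" using one_notin[OF Bfin, of x y] mpos by (auto simp: I_def m_def)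
  have "ideal_atom I"
    unfolding ideal_atom_def
  proof (intro conjI Inz IU ballI impI)
    fix J K assume J: "J \<in> nz_ideals" and K: "K \<in> nz_ideals" and eq: "I = ideal_mult J K"
    have isJ: "is_ideal J" and isK: "is_ideal K" using J K by (auto simp: nz_ideals_def)
    obtain ps where ps: "set ps \<subseteq> J \<times> K" "Xm = sum_list (map (\<lambda>(f,g). f * g) ps)"
      using mult_rep[OF isJ, of Xm K] XmI eq by auto
    obtain qs where qs: "set qs \<subseteq> J \<times> K" "Ym = sum_list (map (\<lambda>(f,g). f * g) qs)"
      using mult_rep[OF isJ, of Ym K] YmI eq by auto
    have fgI: "f * g \<in> I" if "f \<in> J" "g \<in> K" for f g
      using prod_in_mult[OF that] eq by simp
    have "sum_list (map (\<lambda>(f,g). hh y f * hh y g) ps) \<noteq> 0"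
      using hXm ps(2) hh_sumprod[of y ps] by simp
    then obtain z where "z \<in> set (map (\<lambda>(f,g). hh y f * hh y g) ps)" "z \<noteq> 0"
      using sum_list_nonzero by blast
    then obtain f1 g1 where fg1: "(f1, g1) \<in> set ps" "hh y f1 \<noteq> 0" "hh y g1 \<noteq> 0" by auto
    have f1J: "f1 \<in> J" and g1K: "g1 \<in> K" using fg1(1) ps(1) by auto
    define da where "da = (LEAST k. \<exists>f\<in>J. coeff (hh y f) k \<noteq> 0)"
    define db where "db = (LEAST k. \<exists>g\<in>K. coeff (hh y g) k \<noteq> 0)"
    have exa: "\<exists>k. \<exists>f\<in>J. coeff (hh y f) k \<noteq> 0"
      using f1J fg1(2) leading_coeff_neq_0 by blast
    have exb: "\<exists>k. \<exists>g\<in>K. coeff (hh y g) k \<noteq> 0"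
      using g1K fg1(3) leading_coeff_neq_0 by blast
    obtain f0 where f0: "f0 \<in> J" "coeff (hh y f0) da \<noteq> 0"
      using LeastI_ex[OF exa] unfolding da_def[symmetric] by blast
    obtain g0 where g0: "g0 \<in> K" "coeff (hh y g0) db \<noteq> 0"
      using LeastI_ex[OF exb] unfolding db_def[symmetric] by blast
    have alow: "\<forall>k<da. coeff (hh y f) k = 0" if "f \<in> J" for f
      using not_less_Least[of _ "\<lambda>k. \<exists>f\<in>J. coeff (hh y f) k \<noteq> 0"] that unfolding da_def by blast
    have blow: "\<forall>k<db. coeff (hh y g) k = 0" if "g \<in> K" for g
      using not_less_Least[of _ "\<lambda>k. \<exists>g\<in>K. coeff (hh y g) k \<noteq> 0"] that unfolding db_def by blast
    have prodc: "coeff (hh y (f * g)) (da + db) = coeff (hh y f) da * coeff (hh y g) db"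
      if "f \<in> J" "g \<in> K" for f g
      using coeff_mult_low[OF alow[OF that(1)] blow[OF that(2)]] by (simp add: hh_mult)
    have prodlow: "coeff (hh y (f * g)) n = 0" if "f \<in> J" "g \<in> K" "n < da + db" for f g n
      using coeff_mult_below[OF alow[OF that(1)] blow[OF that(2)] that(3)] by (simp add: hh_mult)
    have ab_le: "da + db \<le> m"
    proof (rule ccontr)
      assume "\<not> da + db \<le> m"
      then have lt: "m < da + db" by simp
      have "coeff (hh y Xm) m = sum_list (map (\<lambda>z. coeff z m) (map (\<lambda>(f,g). hh y (f * g)) ps))"
        by (simp add: ps(2) hh_sumprod coeff_sum_list hh_mult case_prod_beta o_def)
      also have "\<dots> = 0"
        by (rule sum_list_zero) (use ps(1) prodlow lt in auto)
      finally show False using hXm by simp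
    qed
    have ab_ge: "m \<le> da + db"
    proof (rule ccontr)
      assume "\<not> m \<le> da + db"
      then have "coeff (hh y (f0 * g0)) (da + db) = 0"
        using I_low[OF Bfin, of "f0 * g0" x y] fgI[OF f0(1) g0(1)] by (simp add: I_def m_def)
      then show False using prodc[OF f0(1) g0(1)] f0(2) g0(2) by simp
    qed
    have abm: "da + db = m" using ab_le ab_ge by simp
    show "J = UNIV \<or> K = UNIV"
    proof (cases "da = 0")
      case True
      have c: "Poly_Mapping.lookup f0 0 \<noteq> 0" using f0(2) True by (simp add: coeff_hh_0)
      have "K \<subseteq> I"
      proof
        fix g assume "g \<in> K"
        then have "f0 * g \<in> I_B x y B" using fgI[OF f0(1)] by (simp add: I_def)
        then show "g \<in> I" using absorb[OF Bfin _ c] by (simp add: I_def)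
      qed
      moreover have "I \<subseteq> K" using eq mult_sub_right[OF isK] by simp
      ultimately have "K = I" by blast
      then have "I = ideal_mult J I" using eq by simp
      then show ?thesis using BF_absorb[OF BF Inz IU J] by simp
    next
      case False
      show ?thesis
      proof (cases "db = 0")
        case True
        have c: "Poly_Mapping.lookup g0 0 \<noteq> 0" using g0(2) True by (simp add: coeff_hh_0)
        have "J \<subseteq> I"
        proof
          fix f assume "f \<in> J"
          then have "g0 * f \<in> I_B x y B" using fgI[OF _ g0(1), of f] by (simp add: I_def mult.commute)
          then show "f \<in> I" using absorb[OF Bfin _ c] by (simp add: I_def)
        qed
        moreover have "I \<subseteq> J" using eq mult_sub_left[OF isJ] by simp
        ultimately have "J = I" by blast
        then have "I = ideal_mult K I" using eq mult_comm[of J K] by simp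
        then show ?thesis using BF_absorb[OF BF Inz IU K] by simp
      next
        case dbpos: False
        define V where "V = {coeff (hh y f) da | f. f \<in> J}"
        define W where "W = {coeff (hh y g) db | g. g \<in> K}"
        have smult_hh: "smult c (coeff (hh y f) k) = coeff (hh y (Poly_Mapping.single 0 c * f)) k" for c f k
          by (simp add: hh_const_mult)
        have Vadd: "P + P' \<in> V" if hP: "P \<in> V" "P' \<in> V" for P P'
        proof -
          obtain f f' where ff: "f \<in> J" "f' \<in> J" "P = coeff (hh y f) da" "P' = coeff (hh y f') da"
            using hP unfolding V_def by blast
          have "P + P' = coeff (hh y (f + f')) da" using ff by (simp add: hh_add)
          moreover have "f + f' \<in> J" using ff ideal_add[OF isJ] by blast
          ultimately show ?thesis unfolding V_def by blast
        qed
        have Vsm: "smult c P \<in> V" if hP: "P \<in> V" for c P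
        proof -
          obtain f where ff: "f \<in> J" "P = coeff (hh y f) da"
            using hP unfolding V_def by blast
          have "smult c P = coeff (hh y (Poly_Mapping.single 0 c * f)) da" using ff by (simp add: smult_hh)
          moreover have "Poly_Mapping.single 0 c * f \<in> J" using ff ideal_mul[OF isJ] by blast
          ultimately show ?thesis unfolding V_def by blast
        qed
        have Wadd: "Q + Q' \<in> W" if hP: "Q \<in> W" "Q' \<in> W" for Q Q'
        proof -
          obtain f f' where ff: "f \<in> K" "f' \<in> K" "Q = coeff (hh y f) db" "Q' = coeff (hh y f') db"
            using hP unfolding W_def by blast
          have "Q + Q' = coeff (hh y (f + f')) db" using ff by (simp add: hh_add)
          moreover have "f + f' \<in> K" using ff ideal_add[OF isK] by blast
          ultimately show ?thesis unfolding W_def by blast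
        qed
        have Wsm: "smult c Q \<in> W" if hP: "Q \<in> W" for c Q
        proof -
          obtain f where ff: "f \<in> K" "Q = coeff (hh y f) db"
            using hP unfolding W_def by blast
          have "smult c Q = coeff (hh y (Poly_Mapping.single 0 c * f)) db" using ff by (simp add: smult_hh)
          moreover have "Poly_Mapping.single 0 c * f \<in> K" using ff ideal_mul[OF isK] by blast
          ultimately show ?thesis unfolding W_def by blast
        qed
        have supp: "k \<in> insert 0 A" if hP: "P \<in> V" "Q \<in> W" "coeff (P * Q) k \<noteq> 0" for P Q k
        proof -
          obtain f g where fg: "f \<in> J" "g \<in> K" "P = coeff (hh y f) da" "Q = coeff (hh y g) db"
            using hP(1,2) unfolding V_def W_def by blast
          have "P * Q = coeff (hh y (f * g)) (Max B)" using prodc[OF fg(1,2)] fg(3,4) abm by (simp add: m_def)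
          then have "coeff (coeff (hh y (f * g)) (Max B)) k \<noteq> 0" using hP(3) by simp
          then have "k \<in> B" using I_mid[OF Bfin xy, of "f * g"] fgI[OF fg(1,2)] by (simp add: I_def)
          then show ?thesis by (simp add: B_def)
        qed
        have conv: "coeff (hh y (sum_list (map (\<lambda>(f,g). f * g) zs))) m =
            sum_list (map (\<lambda>(P,Q). P * Q) (map (\<lambda>(f,g). (coeff (hh y f) da, coeff (hh y g) db)) zs))"
          if "set zs \<subseteq> J \<times> K" for zs
          using that
        proof (induction zs)
          case Nil then show ?case by simp
        next
          case (Cons fg zs)
          obtain f g where fgd: "fg = (f, g)" by (cases fg)
          have "f \<in> J" "g \<in> K" using Cons.prems fgd by auto
          then show ?case using Cons fgd prodc abm by (simp add: hh_add)
        qed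
        let ?ps = "map (\<lambda>(f,g). (coeff (hh y f) da, coeff (hh y g) db)) ps"
        let ?qs = "map (\<lambda>(f,g). (coeff (hh y f) da, coeff (hh y g) db)) qs"
        have ps1: "sum_list (map (\<lambda>(P,Q). P * Q) ?ps) = 1"
          using conv[OF ps(1)] ps(2) hXm by simp
        have psV: "\<forall>(P,Q)\<in>set ?ps. P \<in> V \<and> Q \<in> W"
          using ps(1) unfolding V_def W_def by auto
        have qsVW: "\<forall>(P,Q)\<in>set ?qs. P \<in> V \<and> Q \<in> W"
          using qs(1) unfolding V_def W_def by auto
        have qsdeg: "\<forall>(P,Q)\<in>set ?qs. degree P \<le> da \<and> degree Q \<le> db"
          by (auto simp: degree_coeff_hh)
        have eY: "sum_list (map (\<lambda>(P,Q). P * Q) ?qs) = monom 1 m"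
          using conv[OF qs(1)] qs(2) hYm by simp
        have "coeff (sum_list (map (\<lambda>(P,Q). P * Q) ?qs)) (da + db) \<noteq> 0"
          unfolding eY abm by simp
        then obtain P2 Q2 where PQ2: "(P2, Q2) \<in> set ?qs" "coeff P2 da \<noteq> 0" "coeff Q2 db \<noteq> 0"
          using pairs_top[OF qsdeg] by blast
        have P2V: "P2 \<in> V" and Q2W: "Q2 \<in> W" using PQ2(1) qsVW by auto
        have da0: "0 < da" and db0: "0 < db" using False dbpos by auto
        have False
          by (rule core[where V=V and W=W and A=A])
             (fact Vadd Vsm Wadd Wsm supp sf psV ps1 P2V PQ2(2) da0 Q2W PQ2(3) db0)+
        then show ?thesis ..
      qed
    qed
  qed
  then show ?thesis by (simp add: I_def B_def)
qed

end
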